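(* Let $K$ be an arbitrary field and let $p(s)=s^n+a_{n-1}s^{n-1}+\dots+a_0\in K[s]$ be a monic irreducible polynomial of degree $n$. Let $k\ge 1$ be an integer, and let $h\in K^q[s]$ and $g\in K^t[s]$ be polynomial vectors such that \[ W=h\,\frac{1}{p^k}\,g^T\in K^{q\times t}(s) \] is a coprime factorization. Write the $p$-adic expansions \[ h=h_0+h_1p+h_2p^2+\cdots,\qquad g=g_0+g_1p+g_2p^2+\cdots, \] where $h_i\in K^q[s]$, $g_i\in K^t[s]$ and every nonzero component of $h_i$ and of $g_i$ has degree $<n$. Let $b(s)=(1,s,\dots,s^{n-1})^T$. For each $i\ge 0$ define $H_i\in K^{q\times n}$ by $h_i(s)=H_i\,b(s)$, and define $G_i\in K^{t\times n}$ by $g_i(s)=G_i\,M\,b(s)$, where $M=M(p)$ is the $n\times n$ Hankel matrix defined in the context. Put \[ H=(H_0,H_1,\dots,H_{k-1})\in K^{q\times nk},\qquad G=\begin{pmatrix}G_{k-1}^T\\ \vdots\\ G_0^T\end{pmatrix}\in K^{nk\times t}. \] Then \[ \pi_-W=H\bigl(sI-J(p^k)\bigr)^{-1}G, \] and this realization is minimal, i.e. there is no triple $(F',G',H')$ with $F'$ square of size less than $nk$ and $H'(sI-F')^{-1}G'=\pi_-W$.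
   Context: $K(s)$ denotes the field of rational functions over $K$. A rational function $f$ is strictly proper if $f=0$ or $f=g/h$ with $g,h\in K[s]$, $gh\neq 0$, $\deg g<\deg h$. Every $f\in K(s)$ decomposes uniquely as $f=w+y$ with $w$ strictly proper and $y\in K[s]$; one sets $\pi_-f=w$, and $\pi_-$ is applied entrywise to vectors and matrices. The factorization $W=h\,p^{-k}\,g^T$ is called coprime if $h$ and $p^k$ are right coprime and $p^k$ and $g^T$ are left coprime; concretely, $p$ and the entries of $h$ have no nonconstant common factor, and $p$ and the entries of $g$ have no nonconstant common factor. The companion matrix of $p$ is the $n\times n$ matrix $C=C(p)$ with ones on the superdiagonal (entries $(i,i+1)$, $i=1,\dots,n-1$), last row $(-a_0,-a_1,\dots,-a_{n-1})$, and zeros elsewhere (if $n=1$, $p=s-\lambda$, then $C=(\lambda)$). Let $V=e_ne_1^T$ be the $n\times n$ matrix whose only nonzero entry is a $1$ in position $(n,1)$. Let $N_k$ be the $k\times k$ matrix with ones on the superdiagonal and zeros elsewhere. The Jacobson block of $p^k$ is the $nk\times nk$ block upper bidiagonal matrix \[ J(p^k)=I_k\otimes C+N_k\otimes V, \] i.e. $C$ in every diagonal block, $V$ in every block immediately above the diagonal, and zero blocks elsewhere; here $\otimes$ is the Kronecker product $A\otimes B=(a_{ij}B)$. $M=M(p)$ is the $n\times n$ matrix whose $(i,j)$ entry is $a_{i+j-1}$ if $i+j-1\le n-1$, equals $1$ if $i+j-1=n$, and equals $0$ if $i+j-1>n$; i.e. first row $(a_1,a_2,\dots,a_{n-1},1)$,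 second row $(a_2,\dots,a_{n-1},1,0)$, ..., last row $(1,0,\dots,0)$ (for $n=1$, $M=(1)$). $M$ is invertible, so $G_i$ is uniquely determined. *)

theory Defs
  imports "HOL-Computational_Algebra.Polynomial_Factorial" "Jordan_Normal_Form.Matrix"
begin

text \<open>Rational functions K(s) are modelled as the fraction field of K[s]: type 'a poly fract.\<close>

definition strictly_proper :: "'a::field poly fract \<Rightarrow> bool" where
  "strictly_proper f \<longleftrightarrow> f = 0 \<or>
     (\<exists>g h. g * h \<noteq> 0 \<and> degree g < degree h \<and> f = Fract g h)"

definition pi_minus :: "'a::field poly fract \<Rightarrow> 'a poly fract" where
  "pi_minus f = (THE w. strictly_proper w \<and> (\<exists>y. f = w + to_fract y))"

definition emb_mat :: "'a::field mat \<Rightarrow> 'a poly fract mat" where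
  "emb_mat A = map_mat (\<lambda>c. to_fract [:c:]) A"

definition var_s :: "'a::field poly fract" where
  "var_s = to_fract [:0, 1:]"

definition mat_inv :: "'b::field mat \<Rightarrow> 'b mat" where
  "mat_inv A = (THE B. B \<in> carrier_mat (dim_row A) (dim_row A) \<and> inverts_mat A B \<and> inverts_mat B A)"

definition resolvent :: "'a::field mat \<Rightarrow> 'a poly fract mat" where
  "resolvent F = mat_inv (var_s \<cdot>\<^sub>m 1\<^sub>m (dim_row F) - emb_mat F)"

definition kron :: "'b::times mat \<Rightarrow> 'b mat \<Rightarrow> 'b mat" where
  "kron A B = mat (dim_row A * dim_row B) (dim_col A * dim_col B)
     (\<lambda>(i, j). A $$ (i div dim_row B, j div dim_col B) * B $$ (i mod dim_row B, j mod dim_col B))"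

definition companion :: "'a::field poly \<Rightarrow> 'a mat" where
  "companion p = mat (degree p) (degree p)
     (\<lambda>(i, j). if j = i + 1 then 1 else if i = degree p - 1 then - coeff p j else 0)"

definition V_mat :: "nat \<Rightarrow> 'a::field mat" where
  "V_mat n = mat n n (\<lambda>(i, j). if i = n - 1 \<and> j = 0 then 1 else 0)"

definition N_mat :: "nat \<Rightarrow> 'a::field mat" where
  "N_mat k = mat k k (\<lambda>(i, j). if j = i + 1 then 1 else 0)"

definition jacobson_block :: "'a::field poly \<Rightarrow> nat \<Rightarrow> 'a mat" where
  "jacobson_block p k = kron (1\<^sub>m k) (companion p) + kron (N_mat k) (V_mat (degree p))"

text \<open>Hankel matrix M(p), 0-based: entry (i,j) corresponds to 1-based i+j-1 = i+j+1 here.\<close>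
definition hankel_M :: "'a::field poly \<Rightarrow> 'a mat" where
  "hankel_M p = mat (degree p) (degree p)
     (\<lambda>(i, j). if i + j + 1 \<le> degree p - 1 then coeff p (i + j + 1)
              else if i + j + 1 = degree p then 1 else 0)"

definition padic_digit :: "'a::field poly \<Rightarrow> nat \<Rightarrow> 'a poly \<Rightarrow> 'a poly" where
  "padic_digit p i f = (f div p ^ i) mod p"

definition padic_vec :: "'a::field poly \<Rightarrow> nat \<Rightarrow> 'a poly vec \<Rightarrow> 'a poly vec" where
  "padic_vec p i v = map_vec (padic_digit p i) v"

definition bvec :: "nat \<Rightarrow> 'a::field poly vec" where
  "bvec n = vec n (\<lambda>j. monom 1 j)"

definition const_mat :: "'a::field mat \<Rightarrow> 'a poly mat" where
  "const_mat A = map_mat (\<lambda>c. [:c:]) A"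

definition coprime_fact :: "'a::field poly \<Rightarrow> nat \<Rightarrow> 'a poly vec \<Rightarrow> 'a poly vec \<Rightarrow> bool" where
  "coprime_fact p k h g \<longleftrightarrow>
     (\<forall>d. d dvd p ^ k \<and> (\<forall>i < dim_vec h. d dvd h $ i) \<longrightarrow> degree d = 0) \<and>
     (\<forall>d. d dvd p ^ k \<and> (\<forall>i < dim_vec g. d dvd g $ i) \<longrightarrow> degree d = 0)"

end

theory Submission
  imports Defs "Jordan_Normal_Form.Char_Poly"
begin


abbreviation fr :: "'a::field poly \<Rightarrow> 'a poly fract" where "fr \<equiv> to_fract"

definition degP :: "'a::field poly \<Rightarrow> nat \<Rightarrow> bool" where
  "degP a d \<longleftrightarrow> a = 0 \<or> degree a < d"

lemma degP_0[simp]: "degP 0 d" by (simp add: degP_def)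

lemma degP_diff: assumes "degP x d" "degP y d" shows "degP (x - y) d"
proof (cases "x - y = 0")
  case False
  have "degree (x - y) \<le> max (degree x) (degree y)" by (rule degree_diff_le_max)
  moreover have "d > 0" using assms False unfolding degP_def by auto
  ultimately show ?thesis using assms unfolding degP_def by auto
qed (simp add: degP_def)

lemma degP_add: "degP x d \<Longrightarrow> degP y d \<Longrightarrow> degP (x + y) d"
  using degP_diff[of x d "-y"] unfolding degP_def by auto

lemma degP_mult: assumes "degP a d" shows "degP (a * c) (d + degree c)"
proof (cases "a = 0 \<or> c = 0")
  case False
  then show ?thesis using assms unfolding degP_def by (auto simp: degree_mult_eq)
qed auto

lemma degP_mult': "degP a d \<Longrightarrow> degP (c * a) (d + degree c)"
  using degP_mult[of a d c] by (simp add: mult.commute)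

lemma degP_sum: "finite A \<Longrightarrow> (\<And>x. x \<in> A \<Longrightarrow> degP (f x) d) \<Longrightarrow> degP (sum f A) d"
  by (induction A rule: finite_induct) (simp_all add: degP_add)

lemma degP_mono: "degP a d \<Longrightarrow> d \<le> e \<Longrightarrow> degP a e"
  unfolding degP_def by auto


lemma sp_iff: "strictly_proper x \<longleftrightarrow> (\<exists>a b. b \<noteq> 0 \<and> degP a (degree b) \<and> x = fr a / fr b)"
proof
  assume "strictly_proper x"
  then consider "x = 0" | g h where "g * h \<noteq> 0" "degree g < degree h" "x = Fract g h"
    unfolding strictly_proper_def by blast
  then show "\<exists>a b. b \<noteq> 0 \<and> degP a (degree b) \<and> x = fr a / fr b"
  proof cases
    case 1 then show ?thesis by (intro exI[of _ 0] exI[of _ 1]) simp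
  next
    case 2 then show ?thesis
      by (intro exI[of _ g] exI[of _ h]) (auto simp: degP_def Fract_conv_to_fract)
  qed
next
  assume "\<exists>a b. b \<noteq> 0 \<and> degP a (degree b) \<and> x = fr a / fr b"
  then obtain a b where ab: "b \<noteq> 0" "degP a (degree b)" "x = fr a / fr b" by blast
  show "strictly_proper x"
  proof (cases "a = 0")
    case True then show ?thesis using ab by (simp add: strictly_proper_def)
  next
    case False then show ?thesis using ab unfolding strictly_proper_def degP_def
      by (auto simp: Fract_conv_to_fract)
  qed
qed

lemma sp_frac: "b \<noteq> 0 \<Longrightarrow> degP a (degree b) \<Longrightarrow> strictly_proper (fr a / fr b)"
  using sp_iff by blast

lemma sp_diff: assumes "strictly_proper x" "strictly_proper y" shows "strictly_proper (x - y)"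
proof -
  obtain a b where ab: "b \<noteq> 0" "degP a (degree b)" "x = fr a / fr b" using assms(1) sp_iff by blast
  obtain c d where cd: "d \<noteq> 0" "degP c (degree d)" "y = fr c / fr d" using assms(2) sp_iff by blast
  have nz: "fr b \<noteq> 0" "fr d \<noteq> 0" using ab cd by auto
  have "x - y = (fr a * fr d - fr c * fr b) / (fr b * fr d)"
    unfolding ab(3) cd(3) using nz by (simp add: diff_frac_eq)
  also have "\<dots> = fr (a * d - c * b) / fr (b * d)" by simp
  finally have eq: "x - y = fr (a * d - c * b) / fr (b * d)" .
  have "degP (a * d - c * b) (degree (b * d))"
    using degP_mult[OF ab(2), of d] degP_mult'[OF cd(2), of b] ab cd
    by (intro degP_diff) (auto simp: degree_mult_eq add.commute mult.commute)
  then show ?thesis unfolding eq using ab cd by (intro sp_frac) auto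
qed

lemma sp_poly: assumes "strictly_proper (fr y)" shows "y = 0"
proof -
  obtain a b where ab: "b \<noteq> 0" "degP a (degree b)" "fr y = fr a / fr b" using assms sp_iff by blast
  then have "fr y * fr b = fr a" by (simp add: eq_divide_eq)
  then have "y * b = a" by (metis to_fract_eq_iff to_fract_mult)
  then show ?thesis using ab unfolding degP_def
    by (metis degree_mult_eq le_add2 leD mult_eq_0_iff)
qed

lemma pi_minus_eq: assumes "strictly_proper w" "f = w + fr y" shows "pi_minus f = w"
  unfolding pi_minus_def
proof (rule the_equality)
  show "strictly_proper w \<and> (\<exists>y. f = w + fr y)" using assms by blast
next
  fix w' assume "strictly_proper w' \<and> (\<exists>y. f = w' + fr y)"
  then obtain y' where w': "strictly_proper w'" "f = w' + fr y'" by blast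
  have eq: "w' - w = fr (y - y')" using assms w' by (simp add: algebra_simps)
  have "strictly_proper (fr (y - y'))" using sp_diff[OF w'(1) assms(1)] eq by simp
  then have "y - y' = 0" by (rule sp_poly)
  then show "w' = w" using eq by simp
qed


definition gp :: "nat \<Rightarrow> (nat \<Rightarrow> 'a::field) \<Rightarrow> nat \<Rightarrow> 'a poly" where
  "gp N c l = (\<Sum>a\<in>{l..<N}. monom (c a) (a - l))"

lemma coeff_gp: "coeff (gp N c l) m = (if l + m < N then c (l + m) else 0)"
proof -
  have "coeff (gp N c l) m = (\<Sum>a\<in>{l..<N}. if a = l + m then c a else 0)"
    unfolding gp_def coeff_sum coeff_monom by (rule sum.cong) auto
  also have "\<dots> = (if l + m < N then c (l + m) else 0)"
    by (subst sum.delta) auto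
  finally show ?thesis .
qed

lemma gp_N[simp]: "gp N c N = 0" by (simp add: gp_def)

lemma x_mult_coeff: "coeff ([:0,1:] * (P::'a::field poly)) m = (if m = 0 then 0 else coeff P (m - 1))"
  by (cases m) (auto simp: coeff_pCons coeff_mult)

lemma gp_rec: "l < N \<Longrightarrow> gp N c l = [:c l:] + [:0,1:] * gp N c (Suc l)"
  by (rule poly_eqI) (auto simp: coeff_gp x_mult_coeff coeff_pCons split: nat.splits)


lemma mult_entry: "A \<in> carrier_mat a b \<Longrightarrow> B \<in> carrier_mat b c \<Longrightarrow> i < a \<Longrightarrow> j < c \<Longrightarrow>
  (A * B) $$ (i, j) = (\<Sum>k<b. A $$ (i, k) * B $$ (k, j))"
  by (auto simp: index_mult_mat scalar_prod_def atLeast0LessThan intro: sum.cong)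

lemma mat_inv_eq: assumes A: "A \<in> carrier_mat n n" and B: "B \<in> carrier_mat n n"
  and AB: "A * B = 1\<^sub>m n" and BA: "B * A = 1\<^sub>m n"
  shows "mat_inv A = B"
  unfolding mat_inv_def
proof (rule the_equality)
  show "B \<in> carrier_mat (dim_row A) (dim_row A) \<and> inverts_mat A B \<and> inverts_mat B A"
    using A B AB BA by (auto simp: inverts_mat_def)
next
  fix B' assume "B' \<in> carrier_mat (dim_row A) (dim_row A) \<and> inverts_mat A B' \<and> inverts_mat B' A"
  then have B': "B' \<in> carrier_mat n n" "A * B' = 1\<^sub>m n" "B' * A = 1\<^sub>m n" using A
    by (auto simp: inverts_mat_def)
  have "B' = B' * 1\<^sub>m n" using B' by simp
  also have "\<dots> = B' * (A * B)" using AB by simp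
  also have "\<dots> = (B' * A) * B" by (rule assoc_mult_mat[symmetric, OF B'(1) A B])
  also have "\<dots> = B" using B' B by simp
  finally show "B' = B" .
qed

lemma cpm_entry: "F \<in> carrier_mat m m \<Longrightarrow> i < m \<Longrightarrow> j < m \<Longrightarrow>
  char_poly_matrix F $$ (i, j) = (if i = j then [:0,1:] else 0) + [:- F $$ (i, j):]"
  by (simp add: char_poly_matrix_def)

lemma cpm_dims[simp]: "F \<in> carrier_mat m m \<Longrightarrow> dim_row (char_poly_matrix F) = m"
  "F \<in> carrier_mat m m \<Longrightarrow> dim_col (char_poly_matrix F) = m"
  by (simp_all add: char_poly_matrix_def)

lemma fr_pow: "fr (x ^ k) = fr x ^ k"
  by (induction k) auto

lemma fr_neg_const: "fr [:- a:] = - fr [:a:]"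
proof -
  have "[:- a:] = - [:a:]" by simp
  then show ?thesis by (simp only: to_fract_uminus)
qed

lemma D_eq: assumes F: "F \<in> carrier_mat m m"
  shows "var_s \<cdot>\<^sub>m 1\<^sub>m (dim_row F) - emb_mat F = map_mat fr (char_poly_matrix F)"
  using F by (intro eq_matI) (auto simp: cpm_entry emb_mat_def var_s_def fr_neg_const)

lemma fr_hom: "comm_ring_hom (to_fract :: 'a::field poly \<Rightarrow> _)"
  by unfold_locales auto

lemma det_fr: "det (map_mat fr A) = fr (det (A :: 'a::field poly mat))"
  using comm_ring_hom.hom_det[OF fr_hom] by blast

lemma charpoly_nz: "F \<in> carrier_mat m m \<Longrightarrow> char_poly (F :: 'a::field mat) \<noteq> 0"
  using degree_monic_char_poly[of F m] by auto

lemma mat_delete_map: "mat_delete (map_mat f A) i j = map_mat f (mat_delete A i j)"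
  by (intro eq_matI) (auto simp: mat_delete_def)

definition adjP :: "'a::field mat \<Rightarrow> 'a poly mat" where
  "adjP F = adj_mat (char_poly_matrix F)"

lemma resolvent_eq: assumes F: "F \<in> carrier_mat m m"
  shows "resolvent F = (1 / fr (char_poly F)) \<cdot>\<^sub>m map_mat fr (adjP F)"
    and "(var_s \<cdot>\<^sub>m 1\<^sub>m m - emb_mat F) * resolvent F = 1\<^sub>m m"
    and "resolvent F * (var_s \<cdot>\<^sub>m 1\<^sub>m m - emb_mat F) = 1\<^sub>m m"
proof -
  define D where "D = var_s \<cdot>\<^sub>m 1\<^sub>m (dim_row F) - emb_mat F"
  have Dm: "D = map_mat fr (char_poly_matrix F)" unfolding D_def by (rule D_eq[OF F])
  have Dc: "D \<in> carrier_mat m m" using F Dm by simp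
  have detD: "det D = fr (char_poly F)" unfolding Dm det_fr char_poly_def ..
  have nz: "det D \<noteq> 0" using detD charpoly_nz[OF F] by simp
  have adjD: "adj_mat D = map_mat fr (adjP F)"
    using F unfolding Dm adjP_def
    by (intro eq_matI) (auto simp: adj_mat_def cofactor_def mat_delete_map det_fr fr_pow)
  define B where "B = (1 / det D) \<cdot>\<^sub>m adj_mat D"
  have Bc: "B \<in> carrier_mat m m" using adj_mat(1)[OF Dc] unfolding B_def by simp
  have "D * B = (1 / det D) \<cdot>\<^sub>m (D * adj_mat D)" unfolding B_def
    by (rule mult_smult_distrib[OF Dc adj_mat(1)[OF Dc]])
  also have "\<dots> = 1\<^sub>m m" unfolding adj_mat(2)[OF Dc] using nz
    by (intro eq_matI) auto
  finally have DB: "D * B = 1\<^sub>m m" .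
  have "B * D = (1 / det D) \<cdot>\<^sub>m (adj_mat D * D)" unfolding B_def
    by (rule mult_smult_assoc_mat[OF adj_mat(1)[OF Dc] Dc])
  also have "\<dots> = 1\<^sub>m m" unfolding adj_mat(3)[OF Dc] using nz
    by (intro eq_matI) auto
  finally have BD: "B * D = 1\<^sub>m m" .
  have R: "resolvent F = B" unfolding resolvent_def D_def[symmetric]
    by (rule mat_inv_eq[OF Dc Bc DB BD])
  show "resolvent F = (1 / fr (char_poly F)) \<cdot>\<^sub>m map_mat fr (adjP F)"
    unfolding R B_def detD adjD ..
  have "dim_row F = m" using F by simp
  then show "(var_s \<cdot>\<^sub>m 1\<^sub>m m - emb_mat F) * resolvent F = 1\<^sub>m m"
    and "resolvent F * (var_s \<cdot>\<^sub>m 1\<^sub>m m - emb_mat F) = 1\<^sub>m m"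
    using DB BD R unfolding D_def by auto
qed

lemma adjP_carrier: "F \<in> carrier_mat m m \<Longrightarrow> adjP F \<in> carrier_mat m m"
  unfolding adjP_def by (rule adj_mat(1)[OF char_poly_matrix_closed])

lemma cpm_deg: assumes F: "F \<in> carrier_mat m m" and xy: "x < m" "y < m"
  shows "degree (char_poly_matrix F $$ (x, y)) \<le> 1"
  unfolding cpm_entry[OF F xy] by (intro degree_add_le) auto

lemma adjP_deg: assumes F: "F \<in> carrier_mat m m" and ij: "i < m" "j < m"
  shows "degP (adjP F $$ (i, j)) m"
proof -
  let ?A = "mat_delete (char_poly_matrix F) j i"
  have Ac: "?A \<in> carrier_mat (m - 1) (m - 1)"
    by (rule mat_delete_carrier[OF char_poly_matrix_closed[OF F]])
  have "degree (?A $$ (a, b)) \<le> 1" if ab: "a < m - 1" "b < m - 1" for a b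
  proof -
    have e: "?A $$ (a, b) = char_poly_matrix F $$ (if a < j then a else Suc a, if b < i then b else Suc b)"
      unfolding mat_delete_def using ab F by simp
    have "(if a < j then a else Suc a) < m" "(if b < i then b else Suc b) < m" using ab by auto
    then show ?thesis unfolding e by (rule cpm_deg[OF F])
  qed
  then have "degree (det ?A) \<le> 1 * (m - 1)" by (intro degree_det_le[OF _ Ac])
  then have dA: "degree (det ?A) < m" using ij by auto
  have e2: "adjP F $$ (i, j) = (- 1) ^ (j + i) * det ?A"
    using F ij unfolding adjP_def adj_mat_def cofactor_def by simp
  have "degree ((- 1) ^ (j + i) * det ?A) = degree (det ?A)"
    by (cases "even (j + i)") auto
  then show ?thesis unfolding degP_def e2 using dA by simp
qed


lemma emb_carrier[simp]: "emb_mat A \<in> carrier_mat (dim_row A) (dim_col A)"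
  by (simp add: emb_mat_def)

lemma emb_entry: "i < dim_row A \<Longrightarrow> j < dim_col A \<Longrightarrow> emb_mat A $$ (i, j) = fr [:A $$ (i, j):]"
  by (simp add: emb_mat_def)

lemma resolvent_carrier: "F \<in> carrier_mat m m \<Longrightarrow> resolvent F \<in> carrier_mat m m"
  using resolvent_eq(1)[of F m] adjP_carrier[of F m] by simp

lemma degP_smult: "degP p d \<Longrightarrow> degP (Polynomial.smult c p) d"
  unfolding degP_def by auto

lemma real_entry: assumes F: "F \<in> carrier_mat m m" and H: "H' \<in> carrier_mat q m"
  and G: "G' \<in> carrier_mat m t" and rc: "r < q" "c < t"
  shows "\<exists>a. degP a m \<and> (emb_mat H' * resolvent F * emb_mat G') $$ (r, c) = fr a / fr (char_poly F)"
proof -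
  let ?\<chi> = "char_poly F" and ?A = "adjP F"
  have eH: "emb_mat H' \<in> carrier_mat q m" using H emb_carrier[of H'] by simp
  have eG: "emb_mat G' \<in> carrier_mat m t" using G emb_carrier[of G'] by simp
  have R: "resolvent F \<in> carrier_mat m m" by (rule resolvent_carrier[OF F])
  have Ac: "?A \<in> carrier_mat m m" by (rule adjP_carrier[OF F])
  have Rent: "resolvent F $$ (x, y) = fr (?A $$ (x, y)) / fr ?\<chi>" if "x < m" "y < m" for x y
    using that Ac unfolding resolvent_eq(1)[OF F] by simp
  define a where "a = (\<Sum>y<m. (\<Sum>x<m. [:H' $$ (r, x):] * ?A $$ (x, y)) * [:G' $$ (y, c):])"
  have "(emb_mat H' * resolvent F * emb_mat G') $$ (r, c)
      = (\<Sum>y<m. (emb_mat H' * resolvent F) $$ (r, y) * emb_mat G' $$ (y, c))"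
    by (rule mult_entry[OF mult_carrier_mat[OF eH R] eG rc])
  also have "\<dots> = (\<Sum>y<m. (\<Sum>x<m. fr [:H' $$ (r, x):] * (fr (?A $$ (x, y)) / fr ?\<chi>)) * fr [:G' $$ (y, c):])"
  proof (rule sum.cong[OF refl])
    fix y assume y: "y \<in> {..<m}"
    have "(emb_mat H' * resolvent F) $$ (r, y) = (\<Sum>x<m. emb_mat H' $$ (r, x) * resolvent F $$ (x, y))"
      by (rule mult_entry[OF eH R rc(1)]) (use y in auto)
    also have "\<dots> = (\<Sum>x<m. fr [:H' $$ (r, x):] * (fr (?A $$ (x, y)) / fr ?\<chi>))"
      using y H rc by (intro sum.cong[OF refl]) (auto simp: emb_entry Rent)
    finally show "(emb_mat H' * resolvent F) $$ (r, y) * emb_mat G' $$ (y, c) =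
       (\<Sum>x<m. fr [:H' $$ (r, x):] * (fr (?A $$ (x, y)) / fr ?\<chi>)) * fr [:G' $$ (y, c):]"
      using y G rc by (simp add: emb_entry)
  qed
  also have "\<dots> = fr a / fr ?\<chi>"
    unfolding a_def to_fract_sum to_fract_mult sum_divide_distrib
    by (intro sum.cong[OF refl]) (simp add: sum_distrib_right sum_divide_distrib)
  finally have eq: "(emb_mat H' * resolvent F * emb_mat G') $$ (r, c) = fr a / fr ?\<chi>" .
  have "degP a m" unfolding a_def
    using Ac adjP_deg[OF F]
    by (intro degP_sum) (auto intro!: degP_sum degP_smult)
  then show ?thesis using eq by blast
qed


lemma decomp_eq: fixes a n l j j' :: nat assumes "a < n" "l < n" shows "j * n + a = j' * n + l \<longleftrightarrow> j = j' \<and> a = l"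
proof
  assume e: "j * n + a = j' * n + l"
  have "(j * n + a) div n = j" "(j * n + a) mod n = a" using assms by auto
  moreover have "(j' * n + l) div n = j'" "(j' * n + l) mod n = l" using assms by auto
  ultimately show "j = j' \<and> a = l" using e by simp
qed auto

lemma J_entry: assumes n: "degree p = n" "n \<ge> 1" and x: "x < n * k" and c: "c < n * k"
  shows "jacobson_block p k $$ (x, c) =
     (if x + 1 = c then 1 else 0) - (if x = c div n * n + (n - 1) then coeff p (c mod n) else 0)"
proof -
  define j a j' l where "j = x div n" "a = x mod n" "j' = c div n" "l = c mod n"
  have npos: "n > 0" using n by auto
  have xa: "x = j * n + a" "a < n" using npos unfolding j_a_j'_l_def by auto
  have cl: "c = j' * n + l" "l < n" using npos unfolding j_a_j'_l_def by auto
  have jk: "j < k" "j' < k" using x c npos unfolding j_a_j'_l_def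
    by (auto simp: less_mult_imp_div_less mult.commute)
  have dC: "dim_row (companion p) = n" "dim_col (companion p) = n"
    and dV: "dim_row (V_mat n :: 'a mat) = n" "dim_col (V_mat n :: 'a mat) = n"
    and dN: "dim_row (N_mat k :: 'a mat) = k" "dim_col (N_mat k :: 'a mat) = k"
    using n by (auto simp: companion_def V_mat_def N_mat_def)
  have xk: "x < k * n" "c < k * n" using x c by (auto simp: mult.commute)
  have k1: "kron (1\<^sub>m k) (companion p) $$ (x, c) = (1\<^sub>m k :: 'a mat) $$ (j, j') * companion p $$ (a, l)"
    unfolding kron_def using xk dC by (simp add: j_a_j'_l_def)
  have k2: "kron (N_mat k) (V_mat n) $$ (x, c) = (N_mat k :: 'a mat) $$ (j, j') * (V_mat n :: 'a mat) $$ (a, l)"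
    unfolding kron_def using xk dV dN by (simp add: j_a_j'_l_def)
  have jb: "jacobson_block p k $$ (x, c) = kron (1\<^sub>m k) (companion p) $$ (x, c) + kron (N_mat k) (V_mat n) $$ (x, c)"
    unfolding jacobson_block_def n(1)[symmetric] using xk dC dV dN n(1) by (simp add: kron_def)
  have eC: "companion p $$ (a, l) = (if l = a + 1 then 1 else if a = n - 1 then - coeff p l else 0)"
    using xa cl n by (simp add: companion_def)
  have eV: "(V_mat n :: 'a mat) $$ (a, l) = (if a = n - 1 \<and> l = 0 then 1 else 0)"
    using xa cl by (simp add: V_mat_def)
  have eN: "(N_mat k :: 'a mat) $$ (j, j') = (if j' = j + 1 then 1 else 0)"
    using jk by (simp add: N_mat_def)
  have e1m: "(1\<^sub>m k :: 'a mat) $$ (j, j') = (if j = j' then 1 else 0)"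
    using jk by simp
  have "jacobson_block p k $$ (x, c) =
     (if j = j' then (if l = a + 1 then 1 else if a = n - 1 then - coeff p l else 0) else 0)
     + (if j' = j + 1 then (if a = n - 1 \<and> l = 0 then 1 else 0) else 0)"
    unfolding jb k1 k2 eC eV eN e1m by simp
  also have "\<dots> = (if x + 1 = c then 1 else 0) - (if x = c div n * n + (n - 1) then coeff p (c mod n) else 0)"
  proof -
    have e1: "x + 1 = c \<longleftrightarrow> (j = j' \<and> l = a + 1) \<or> (j' = j + 1 \<and> a = n - 1 \<and> l = 0)"
    proof (cases "a + 1 < n")
      case True
      have "x + 1 = j * n + (a + 1)" using xa by simp
      then show ?thesis using decomp_eq[OF True cl(2), of j j'] cl True by auto
    next
      case False
      then have an: "a = n - 1" using xa by auto
      have "x + 1 = (j + 1) * n + 0" using xa an npos by (simp add: algebra_simps)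
      then show ?thesis using decomp_eq[OF npos cl(2), of "j+1" j'] cl an by auto
    qed
    have e2: "x = c div n * n + (n - 1) \<longleftrightarrow> j = j' \<and> a = n - 1"
    proof -
      have "c div n * n + (n - 1) = j' * n + (n - 1)" unfolding j_a_j'_l_def ..
      then show ?thesis using decomp_eq[of a n "n - 1" j j'] xa npos by simp
    qed
    show ?thesis unfolding e1 e2 using cl xa unfolding j_a_j'_l_def[symmetric] by auto
  qed
  finally show ?thesis .
qed

lemma sum_split: "(\<Sum>x<(n::nat) * k. f x) = (\<Sum>j<k. \<Sum>l<n. f (j * n + l))"
proof (induction k)
  case (Suc k)
  have "(\<Sum>x<n * Suc k. f x) = (\<Sum>x<n * k. f x) + (\<Sum>x\<in>{n * k..<n * k + n}. f x)"
    by (simp add: sum.atLeastLessThan_concat[symmetric] lessThan_atLeast0 algebra_simps)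
  also have "(\<Sum>x\<in>{n * k..<n * k + n}. f x) = (\<Sum>l<n. f (k * n + l))"
    using sum.shift_bounds_nat_ivl[of f 0 "n * k" n]
    by (simp add: lessThan_atLeast0 algebra_simps)
  finally show ?case using Suc by simp
qed simp


definition Qp :: "'a::field poly \<Rightarrow> nat \<Rightarrow> 'a poly" where
  "Qp p l = gp (degree p + 1) (coeff p) l"

lemma Qp0: "Qp p 0 = p"
  by (rule poly_eqI) (auto simp: Qp_def coeff_gp coeff_eq_0)

lemma Qpn: "lead_coeff p = 1 \<Longrightarrow> Qp p (degree p) = 1"
  unfolding Qp_def by (subst gp_rec) auto

lemma Qp_rec: "l \<le> degree p \<Longrightarrow> Qp p l = [:coeff p l:] + [:0,1:] * Qp p (Suc l)"
  unfolding Qp_def by (rule gp_rec) auto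

lemma expansion: "(f::'a::field poly) = (\<Sum>i<k. padic_digit p i f * p ^ i) + f div p ^ k * p ^ k"
proof (induction k)
  case (Suc k)
  have "f div p ^ k = f div p ^ k div p * p + f div p ^ k mod p" by simp
  moreover have "f div p ^ Suc k = f div p ^ k div p" unfolding power_Suc2 by (rule poly_div_mult_right)
  ultimately have "f div p ^ k * p ^ k = (f div p ^ Suc k * p + padic_digit p k f) * p ^ k"
    unfolding padic_digit_def by simp
  then have "f div p ^ k * p ^ k = padic_digit p k f * p ^ k + f div p ^ Suc k * p ^ Suc k"
    by (simp add: algebra_simps)
  then show ?case using Suc by (simp add: algebra_simps)
qed simp

lemma hd_eq: assumes hyp: "padic_vec p i h = const_mat Hi *\<^sub>v bvec n"
  and Hi: "Hi \<in> carrier_mat q n" and r: "r < q" and dh: "dim_vec h = q"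
  shows "padic_digit p i (h $ r) = gp n (\<lambda>a. Hi $$ (r, a)) 0"
proof -
  have "padic_digit p i (h $ r) = padic_vec p i h $ r" using r dh by (simp add: padic_vec_def)
  also have "\<dots> = (const_mat Hi *\<^sub>v bvec n) $ r" using hyp by simp
  also have "\<dots> = (\<Sum>a<n. [:Hi $$ (r, a):] * monom 1 a)"
    using Hi r by (simp add: const_mat_def bvec_def scalar_prod_def atLeast0LessThan)
  also have "\<dots> = gp n (\<lambda>a. Hi $$ (r, a)) 0"
    by (simp add: gp_def atLeast0LessThan smult_monom)
  finally show ?thesis .
qed

lemma hankel_row: assumes monic: "lead_coeff p = 1" and x: "x < degree p"
  shows "(\<Sum>l<degree p. monom (hankel_M p $$ (x, l)) l) = Qp p (Suc x)"
proof (rule poly_eqI)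
  fix m
  let ?n = "degree p"
  have "coeff (\<Sum>l<?n. monom (hankel_M p $$ (x, l)) l) m = (\<Sum>l<?n. if l = m then hankel_M p $$ (x, l) else 0)"
    unfolding coeff_sum coeff_monom by (rule sum.cong) auto
  also have "\<dots> = (if m < ?n then hankel_M p $$ (x, m) else 0)"
    by (subst sum.delta) auto
  also have "\<dots> = coeff (Qp p (Suc x)) m"
  proof (cases "m < ?n")
    case True
    have "hankel_M p $$ (x, m) = coeff p (x + m + 1)"
      using True x monic by (auto simp: hankel_M_def coeff_eq_0)
    then show ?thesis using True by (auto simp: Qp_def coeff_gp coeff_eq_0)
  next
    case False
    then show ?thesis by (simp add: Qp_def coeff_gp)
  qed
  finally show "coeff (\<Sum>l<?n. monom (hankel_M p $$ (x, l)) l) m = coeff (Qp p (Suc x)) m" .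
qed

lemma gd_eq: assumes hyp: "padic_vec p i g = const_mat (Gi * hankel_M p) *\<^sub>v bvec (degree p)"
  and Gi: "Gi \<in> carrier_mat t (degree p)" and c: "c < t" and dg: "dim_vec g = t"
  and monic: "lead_coeff p = 1"
  shows "padic_digit p i (g $ c) = (\<Sum>x<degree p. Polynomial.smult (Gi $$ (c, x)) (Qp p (Suc x)))"
proof -
  let ?n = "degree p"
  have Mc: "hankel_M p \<in> carrier_mat ?n ?n" by (simp add: hankel_M_def)
  have "padic_digit p i (g $ c) = padic_vec p i g $ c" using c dg by (simp add: padic_vec_def)
  also have "\<dots> = (const_mat (Gi * hankel_M p) *\<^sub>v bvec ?n) $ c" using hyp by simp
  also have "\<dots> = (\<Sum>l<?n. [:(Gi * hankel_M p) $$ (c, l):] * monom 1 l)"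
    using Gi Mc c by (simp add: const_mat_def bvec_def scalar_prod_def atLeast0LessThan)
  also have "\<dots> = (\<Sum>l<?n. \<Sum>x<?n. monom (Gi $$ (c, x) * hankel_M p $$ (x, l)) l)"
  proof (intro sum.cong refl)
    fix l assume l: "l \<in> {..<?n}"
    have "(Gi * hankel_M p) $$ (c, l) = (\<Sum>x<?n. Gi $$ (c, x) * hankel_M p $$ (x, l))"
      using l by (intro mult_entry[OF Gi Mc c]) auto
    then show "[:(Gi * hankel_M p) $$ (c, l):] * monom 1 l = (\<Sum>x<?n. monom (Gi $$ (c, x) * hankel_M p $$ (x, l)) l)"
      by (simp add: smult_monom monom_sum)
  qed
  also have "\<dots> = (\<Sum>x<?n. Polynomial.smult (Gi $$ (c, x)) (\<Sum>l<?n. monom (hankel_M p $$ (x, l)) l))"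
    by (subst sum.swap) (simp add: smult_sum2 smult_monom)
  also have "\<dots> = (\<Sum>x<?n. Polynomial.smult (Gi $$ (c, x)) (Qp p (Suc x)))"
    using hankel_row[OF monic] by (intro sum.cong refl) simp
  finally show ?thesis .
qed


definition Sh :: "'a::field poly \<Rightarrow> (nat \<Rightarrow> 'a poly) \<Rightarrow> nat \<Rightarrow> 'a poly" where
  "Sh p d j = (\<Sum>i\<le>j. d i * p ^ i)"

lemma Sh_Suc: "Sh p d (Suc j) = Sh p d j + d (Suc j) * p ^ Suc j"
  by (simp add: Sh_def)

lemma Sh_dvd: "a \<le> b \<Longrightarrow> p ^ Suc a dvd Sh p d b - Sh p d a"
proof (induction b rule: dec_induct)
  case (step b)
  have e: "Sh p d (Suc b) - Sh p d a = (Sh p d b - Sh p d a) + d (Suc b) * p ^ Suc b"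
    by (simp add: Sh_Suc algebra_simps)
  have "p ^ Suc a dvd d (Suc b) * p ^ Suc b"
    using step(1) by (intro dvd_mult le_imp_power_dvd) auto
  then show ?case unfolding e by (rule dvd_add[OF step(3)])
qed simp

lemma cong_main:
  fixes hh gg :: "'a::field poly"
  assumes k: "k \<ge> 1"
    and hh: "hh = (\<Sum>i<k. hdg i * p ^ i) + X1 * p ^ k"
    and gg: "gg = (\<Sum>m<k. gdg m * p ^ m) + X2 * p ^ k"
  shows "p ^ k dvd hh * gg - (\<Sum>j<k. Sh p hdg j * gdg (k - 1 - j) * p ^ (k - 1 - j))"
proof -
  let ?Sh = "Sh p hdg (k - 1)" and ?Sg = "\<Sum>m<k. gdg m * p ^ m"
  have Shk: "(\<Sum>i<k. hdg i * p ^ i) = ?Sh"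
    unfolding Sh_def using k by (intro sum.cong) auto
  have N: "(\<Sum>j<k. Sh p hdg j * gdg (k - 1 - j) * p ^ (k - 1 - j))
         = (\<Sum>m<k. Sh p hdg (k - 1 - m) * gdg m * p ^ m)"
  proof -
    have "(\<Sum>m<k. Sh p hdg (k - 1 - m) * gdg m * p ^ m)
        = (\<Sum>j<k. Sh p hdg (k - 1 - (k - Suc j)) * gdg (k - Suc j) * p ^ (k - Suc j))"
      by (rule sum.nat_diff_reindex[symmetric])
    also have "\<dots> = (\<Sum>j<k. Sh p hdg j * gdg (k - 1 - j) * p ^ (k - 1 - j))"
      by (intro sum.cong) auto
    finally show ?thesis by simp
  qed
  have e1: "hh * gg = ?Sh * ?Sg + p ^ k * (X1 * ?Sg + ?Sh * X2 + X1 * X2 * p ^ k)"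
    unfolding hh gg Shk by (simp add: algebra_simps)
  have e2:  "?Sh * ?Sg - (\<Sum>m<k. Sh p hdg (k - 1 - m) * gdg m * p ^ m)
      = (\<Sum>m<k. (?Sh - Sh p hdg (k - 1 - m)) * gdg m * p ^ m)"
    by (simp add: sum_distrib_left sum_subtractf algebra_simps)
  have d: "p ^ k dvd (\<Sum>m<k. (?Sh - Sh p hdg (k - 1 - m)) * gdg m * p ^ m)"
  proof (rule dvd_sum)
    fix m assume m: "m \<in> {..<k}"
    have d1: "p ^ Suc (k - 1 - m) dvd ?Sh - Sh p hdg (k - 1 - m)" by (rule Sh_dvd) auto
    have eq: "Suc (k - 1 - m) + m = k" using m k by auto
    have pk: "p ^ k = p ^ Suc (k - 1 - m) * p ^ m" unfolding power_add[symmetric] eq ..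
    have "p ^ k dvd (?Sh - Sh p hdg (k - 1 - m)) * p ^ m"
      unfolding pk by (rule mult_dvd_mono[OF d1 dvd_refl])
    then have "p ^ k dvd (?Sh - Sh p hdg (k - 1 - m)) * p ^ m * gdg m" by (rule dvd_mult2)
    then show "p ^ k dvd (?Sh - Sh p hdg (k - 1 - m)) * gdg m * p ^ m"
      by (simp add: ac_simps)
  qed
  have eqn: "hh * gg - (\<Sum>m<k. Sh p hdg (k - 1 - m) * gdg m * p ^ m)
     = (?Sh * ?Sg - (\<Sum>m<k. Sh p hdg (k - 1 - m) * gdg m * p ^ m)) + p ^ k * (X1 * ?Sg + ?Sh * X2 + X1 * X2 * p ^ k)"
    unfolding e1 by (simp add: algebra_simps)
  have d2: "p ^ k dvd (?Sh * ?Sg - (\<Sum>m<k. Sh p hdg (k - 1 - m) * gdg m * p ^ m)) + p ^ k * (X1 * ?Sg + ?Sh * X2 + X1 * X2 * p ^ k)"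
    by (rule dvd_add) (simp_all only: e2 d dvd_triv_left)
  show ?thesis unfolding N eqn by (rule d2)
qed


lemma irr_degree: "irreducible (p :: 'a::field poly) \<Longrightarrow> degree p \<ge> 1"
  by (metis irreducible_not_unit irreducible_def is_unit_iff_degree less_one not_less)

locale ctx =
  fixes p :: "'a::field poly" and k q t :: nat
    and h g :: "'a poly vec" and Hs Gs :: "nat \<Rightarrow> 'a mat"
  assumes monic: "lead_coeff p = 1"
    and irr: "irreducible p"
    and k: "k \<ge> 1"
    and dimh: "dim_vec h = q" and dimg: "dim_vec g = t"
    and cop: "coprime_fact p k h g"
    and Hs_dim: "\<forall>i. Hs i \<in> carrier_mat q (degree p)"
    and Hs_def: "\<forall>i. padic_vec p i h = const_mat (Hs i) *\<^sub>v bvec (degree p)"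
    and Gs_dim: "\<forall>i. Gs i \<in> carrier_mat t (degree p)"
    and Gs_def: "\<forall>i. padic_vec p i g = const_mat (Gs i * hankel_M p) *\<^sub>v bvec (degree p)"
begin

abbreviation "n \<equiv> degree p"

lemma n1: "n \<ge> 1" using irr by (rule irr_degree)

lemma p_nz: "p \<noteq> 0" using n1 by auto

definition hdg :: "nat \<Rightarrow> nat \<Rightarrow> 'a poly" where "hdg r i = padic_digit p i (h $ r)"
definition gdg :: "nat \<Rightarrow> nat \<Rightarrow> 'a poly" where "gdg c i = padic_digit p i (g $ c)"
definition Af :: "nat \<Rightarrow> nat \<Rightarrow> 'a poly fract" where
  "Af r j = fr (Sh p (hdg r) j) / fr (p ^ Suc j)"
definition Uf :: "nat \<Rightarrow> nat \<Rightarrow> nat \<Rightarrow> 'a poly" where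
  "Uf r j l = gp n (\<lambda>a. Hs j $$ (r, a)) l"

definition Ym :: "'a poly fract mat" where
  "Ym = mat q (n * k) (\<lambda>(r, x). Af r (x div n) * fr (Qp p (Suc (x mod n))) - fr (Uf r (x div n) (Suc (x mod n))))"

definition Hm :: "'a mat" where "Hm = mat q (n * k) (\<lambda>(r, c). Hs (c div n) $$ (r, c mod n))"
definition Gm :: "'a mat" where "Gm = mat (n * k) t (\<lambda>(r, c). Gs (k - 1 - r div n) $$ (c, r mod n))"
definition Wm :: "'a poly fract mat" where
  "Wm = mat q t (\<lambda>(r, c). to_fract (h $ r) * to_fract (g $ c) / to_fract (p ^ k))"

abbreviation "Jb \<equiv> jacobson_block p k"
abbreviation "Dm \<equiv> var_s \<cdot>\<^sub>m 1\<^sub>m (n * k) - emb_mat Jb"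

lemma Jb_carrier: "Jb \<in> carrier_mat (n * k) (n * k)"
  by (simp add: jacobson_block_def kron_def companion_def N_mat_def V_mat_def mult.commute)

lemma hdg_U: "r < q \<Longrightarrow> hdg r j = Uf r j 0"
  unfolding hdg_def Uf_def using Hs_def Hs_dim dimh by (intro hd_eq) auto

lemma gdg_Q: "c < t \<Longrightarrow> gdg c m = (\<Sum>x<n. Polynomial.smult (Gs m $$ (c, x)) (Qp p (Suc x)))"
  unfolding gdg_def using Gs_def Gs_dim dimg monic by (intro gd_eq) auto

lemma Af_0: "Af r 0 * fr p = fr (hdg r 0)"
  using p_nz by (simp add: Af_def Sh_def)

lemma Af_Suc: "Af r (Suc j) * fr p = fr (hdg r (Suc j)) + Af r j"
proof -
  have nz: "fr p \<noteq> 0" "fr p ^ j \<noteq> 0" using p_nz by auto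
  have "Af r (Suc j) * fr p = (fr (Sh p (hdg r) j) + fr (hdg r (Suc j)) * fr p ^ Suc j) / fr p ^ Suc j"
    unfolding Af_def Sh_Suc using nz by (simp add: fr_pow)
  also have "\<dots> = fr (hdg r (Suc j)) + Af r j"
    unfolding Af_def using nz by (simp add: fr_pow add_divide_distrib)
  finally show ?thesis .
qed

end


lemma sum_delta_mult: "finite A \<Longrightarrow> (\<Sum>x\<in>A. f x * (if x = c then v else 0)) = (if c \<in> A then f c * v else (0::'b::comm_ring_1))"
proof -
  assume A: "finite A"
  have "(\<Sum>x\<in>A. f x * (if x = c then v else 0)) = (\<Sum>x\<in>A. if x = c then f x * v else 0)"
    by (rule sum.cong) auto
  also have "\<dots> = (if c \<in> A then f c * v else 0)" using A by (subst sum.delta) auto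
  finally show ?thesis .
qed

lemma sum_delta_pred: "(\<Sum>x<(N::nat). f x * (if x + 1 = (c::nat) then 1 else 0)) = (if c \<ge> 1 \<and> c - 1 < N then f (c - 1) else (0::'b::comm_ring_1))"
proof (cases c)
  case 0 then show ?thesis by simp
next
  case (Suc c')
  have "(\<Sum>x<N. f x * (if x + 1 = c then 1 else 0)) = (\<Sum>x<N. f x * (if x = c' then 1 else 0))"
    using Suc by (intro sum.cong) auto
  also have "\<dots> = (if c' < N then f c' * 1 else 0)" by (subst sum_delta_mult) auto
  finally show ?thesis using Suc by simp
qed

lemma fr_const_diff: "fr [:a - b:] = fr [:a:] - fr [:b:]"
proof -
  have "[:a - b:] = [:a:] - [:b:]" by simp
  then show ?thesis by (simp only: to_fract_diff)
qed

context ctx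
begin

lemma Ym_carrier: "Ym \<in> carrier_mat q (n * k)" by (simp add: Ym_def)

lemma Ym_entry: "r < q \<Longrightarrow> x < n * k \<Longrightarrow>
  Ym $$ (r, x) = Af r (x div n) * fr (Qp p (Suc (x mod n))) - fr (Uf r (x div n) (Suc (x mod n)))"
  by (simp add: Ym_def)

lemma idx_lt: "j < k \<Longrightarrow> l < n \<Longrightarrow> j * n + l < n * k"
proof -
  assume "j < k" "l < n"
  then have "j * n + l < j * n + n" by simp
  also have "\<dots> = Suc j * n" by simp
  also have "\<dots> \<le> k * n" using \<open>j < k\<close> by (intro mult_right_mono) auto
  finally show ?thesis by (simp add: mult.commute)
qed

lemma idx_div: "l < n \<Longrightarrow> (j * n + l) div n = j" using n1 by simp
lemma idx_mod: "l < n \<Longrightarrow> (j * n + l) mod n = l" using n1 by simp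

lemma Ym_jl: "r < q \<Longrightarrow> j < k \<Longrightarrow> l < n \<Longrightarrow>
  Ym $$ (r, j * n + l) = Af r j * fr (Qp p (Suc l)) - fr (Uf r j (Suc l))"
  using Ym_entry[of r "j * n + l"] idx_lt idx_div idx_mod by simp

lemma Ym_last: "r < q \<Longrightarrow> j < k \<Longrightarrow> Ym $$ (r, j * n + (n - 1)) = Af r j"
proof -
  assume "r < q" "j < k"
  then have "Ym $$ (r, j * n + (n - 1)) = Af r j * fr (Qp p n) - fr (Uf r j n)"
    using Ym_jl[of r j "n - 1"] n1 by simp
  then show ?thesis using monic by (simp add: Qpn Uf_def)
qed

lemma Dm_entry: assumes x: "x < n * k" and c: "c < n * k"
  shows "Dm $$ (x, c) = (if x = c then var_s else 0) - (if x + 1 = c then 1 else 0)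
     + (if x = c div n * n + (n - 1) then fr [:coeff p (c mod n):] else 0)"
proof -
  have "Dm $$ (x, c) = var_s * (if x = c then 1 else 0) - fr [:Jb $$ (x, c):]"
    using x c Jb_carrier by (simp add: emb_mat_def)
  also have "Jb $$ (x, c) = (if x + 1 = c then 1 else 0) - (if x = c div n * n + (n - 1) then coeff p (c mod n) else 0)"
    by (rule J_entry[OF refl n1 x c])
  finally show ?thesis by (simp add: fr_const_diff pCons_one)
qed

end


context ctx
begin

lemma Dm_carrier: "Dm \<in> carrier_mat (n * k) (n * k)"
  by (rule minus_carrier_mat) (simp add: emb_mat_def Jb_carrier)

lemma Hm_carrier: "Hm \<in> carrier_mat q (n * k)" by (simp add: Hm_def)
lemma Gm_carrier: "Gm \<in> carrier_mat (n * k) t" by (simp add: Gm_def)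

lemma fQ: assumes "l \<le> n" shows "fr (Qp p l) = fr [:coeff p l:] + var_s * fr (Qp p (Suc l))"
proof -
  have "Qp p l = [:coeff p l:] + [:0,1:] * Qp p (Suc l)" using assms by (rule Qp_rec)
  then show ?thesis by (simp only: var_s_def to_fract_add to_fract_mult)
qed

lemma fU: assumes "l < n" shows "fr (Uf r j l) = fr [:Hs j $$ (r, l):] + var_s * fr (Uf r j (Suc l))"
proof -
  have "Uf r j l = [:Hs j $$ (r, l):] + [:0,1:] * Uf r j (Suc l)" unfolding Uf_def using assms by (rule gp_rec)
  then show ?thesis by (simp only: var_s_def to_fract_add to_fract_mult)
qed

lemma YD_entry: assumes r: "r < q" and c: "c < n * k"
  shows "(Ym * Dm) $$ (r, c) = emb_mat Hm $$ (r, c)"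
proof -
  define j l where "j = c div n" "l = c mod n"
  have cjl: "c = j * n + l" and l: "l < n" using n1 unfolding j_l_def by auto
  have ck: "c < k * n" using c by (simp add: mult.commute)
  have j: "j < k" unfolding j_l_def by (rule less_mult_imp_div_less[OF ck])
  define e where "e = j * n + (n - 1)"
  have e_eq: "c div n * n + (n - 1) = e" unfolding e_def j_l_def ..
  have e_lt: "e < n * k" unfolding e_def using idx_lt[OF j, of "n - 1"] n1 by simp
  have lc: "c mod n = l" unfolding j_l_def ..
  have "(Ym * Dm) $$ (r, c) = (\<Sum>x<n * k. Ym $$ (r, x) * Dm $$ (x, c))"
    by (rule mult_entry[OF Ym_carrier Dm_carrier r c])
  also have "\<dots> = (\<Sum>x<n * k. Ym $$ (r, x) * (if x = c then var_s else 0)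
        - Ym $$ (r, x) * (if x + 1 = c then 1 else 0)
        + Ym $$ (r, x) * (if x = e then fr [:coeff p l:] else 0))"
  proof (intro sum.cong refl)
    fix x assume x: "x \<in> {..<n * k}"
    have "Dm $$ (x, c) = (if x = c then var_s else 0) - (if x + 1 = c then 1 else 0)
        + (if x = e then fr [:coeff p l:] else 0)"
      using Dm_entry[of x c] x c unfolding e_eq lc by simp
    then show "Ym $$ (r, x) * Dm $$ (x, c) = Ym $$ (r, x) * (if x = c then var_s else 0)
        - Ym $$ (r, x) * (if x + 1 = c then 1 else 0)
        + Ym $$ (r, x) * (if x = e then fr [:coeff p l:] else 0)"
      by (simp only: distrib_left right_diff_distrib)
  qed
  also have "\<dots> = Ym $$ (r, c) * var_s - (if c \<ge> 1 then Ym $$ (r, c - 1) else 0)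
        + Ym $$ (r, e) * fr [:coeff p l:]"
  proof -
    have s1: "(\<Sum>x<n * k. Ym $$ (r, x) * (if x = c then var_s else 0)) = Ym $$ (r, c) * var_s"
      using c by (subst sum_delta_mult) auto
    have s2: "(\<Sum>x<n * k. Ym $$ (r, x) * (if x + 1 = c then 1 else 0)) = (if c \<ge> 1 then Ym $$ (r, c - 1) else 0)"
      using c by (subst sum_delta_pred) auto
    have s3: "(\<Sum>x<n * k. Ym $$ (r, x) * (if x = e then fr [:coeff p l:] else 0)) = Ym $$ (r, e) * fr [:coeff p l:]"
      using e_lt by (subst sum_delta_mult) auto
    show ?thesis by (simp only: sum.distrib sum_subtractf s1 s2 s3)
  qed
  also have "\<dots> = fr [:Hs j $$ (r, l):]"
  proof (cases "l \<ge> 1")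
    case True
    have c1: "c - 1 = j * n + (l - 1)" using cjl True by simp
    have Yc1: "Ym $$ (r, c - 1) = Af r j * fr (Qp p l) - fr (Uf r j l)"
      unfolding c1 using Ym_jl[OF r j, of "l - 1"] l True by simp
    have Yc: "Ym $$ (r, c) = Af r j * fr (Qp p (Suc l)) - fr (Uf r j (Suc l))"
      unfolding cjl using Ym_jl[OF r j l] .
    have Ye: "Ym $$ (r, e) = Af r j" unfolding e_def by (rule Ym_last[OF r j])
    have QL: "fr (Qp p l) = fr [:coeff p l:] + var_s * fr (Qp p (Suc l))" using l by (intro fQ) simp
    have UL: "fr (Uf r j l) = fr [:Hs j $$ (r, l):] + var_s * fr (Uf r j (Suc l))" using l by (rule fU)
    have c_ge: "c \<ge> 1" using cjl True by simp
    show ?thesis unfolding Yc1 Yc Ye QL UL if_P[OF c_ge] by (simp add: algebra_simps)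
  next
    case False
    then have l0: "l = 0" by simp
    have Yc: "Ym $$ (r, c) = Af r j * fr (Qp p 1) - fr (Uf r j 1)"
      unfolding cjl using Ym_jl[OF r j l] l0 by simp
    have Ye: "Ym $$ (r, e) = Af r j" unfolding e_def by (rule Ym_last[OF r j])
    have pQ: "fr p = fr [:coeff p 0:] + var_s * fr (Qp p 1)"
      using fQ[of 0] Qp0[of p] by simp
    have hU: "fr (hdg r j) = fr [:Hs j $$ (r, 0):] + var_s * fr (Uf r j 1)"
      using hdg_U[OF r, of j] fU[of 0 r j] n1 by simp
    show ?thesis
    proof (cases "j = 0")
      case True
      then have c0: "c = 0" using cjl l0 by simp
      have A: "Af r j * fr p = fr (hdg r j)" using Af_0 True by simp
      have "Ym $$ (r, c) * var_s - (if c \<ge> 1 then Ym $$ (r, c - 1) else 0) + Ym $$ (r, e) * fr [:coeff p l:]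
          = Af r j * (fr [:coeff p 0:] + var_s * fr (Qp p 1)) - var_s * fr (Uf r j 1)"
      proof -
        have ifc: "(if c \<ge> 1 then Ym $$ (r, c - 1) else 0) = 0" using c0 by simp
        show ?thesis unfolding ifc Yc Ye l0 by (simp add: algebra_simps)
      qed
      also have "\<dots> = fr [:Hs j $$ (r, 0):]" unfolding pQ[symmetric] A hU by simp
      finally show ?thesis unfolding l0 .
    next
      case False
      then obtain j' where j': "j = Suc j'" by (cases j) auto
      have c1: "c - 1 = j' * n + (n - 1)" using cjl l0 j' n1 by simp
      have Yc1: "Ym $$ (r, c - 1) = Af r j'" unfolding c1 using Ym_last[OF r] j j' by simp
      have A: "Af r j * fr p = fr (hdg r j) + Af r j'" using Af_Suc[of r j'] j' by simp
      have c_ge: "c \<ge> 1" using cjl j' n1 by simp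
      have "Ym $$ (r, c) * var_s - (if c \<ge> 1 then Ym $$ (r, c - 1) else 0) + Ym $$ (r, e) * fr [:coeff p l:]
          = Af r j * (fr [:coeff p 0:] + var_s * fr (Qp p 1)) - Af r j' - var_s * fr (Uf r j 1)"
      proof -
        have ifc: "(if c \<ge> 1 then Ym $$ (r, c - 1) else 0) = Af r j'" using c_ge Yc1 by simp
        show ?thesis unfolding ifc Yc Ye l0 by (simp add: algebra_simps)
      qed
      also have "\<dots> = fr [:Hs j $$ (r, 0):]" unfolding pQ[symmetric] A hU by simp
      finally show ?thesis unfolding l0 .
    qed
  qed
  also have "\<dots> = emb_mat Hm $$ (r, c)"
    using r c by (simp add: emb_mat_def Hm_def j_l_def)
  finally show ?thesis .
qed

end


lemma fr_smult: "fr (Polynomial.smult a P) = fr [:a:] * fr P"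
proof -
  have "Polynomial.smult a P = [:a:] * P" by simp
  then show ?thesis by (simp only: to_fract_mult)
qed

context ctx
begin

lemma YD: "Ym * Dm = emb_mat Hm"
  using YD_entry Ym_carrier Dm_carrier Hm_carrier
  by (intro eq_matI) (auto simp: emb_mat_def)

lemma HR: "emb_mat Hm * resolvent Jb = Ym"
proof -
  have R: "resolvent Jb \<in> carrier_mat (n * k) (n * k)" by (rule resolvent_carrier[OF Jb_carrier])
  have DR: "Dm * resolvent Jb = 1\<^sub>m (n * k)" by (rule resolvent_eq(2)[OF Jb_carrier])
  have "emb_mat Hm * resolvent Jb = (Ym * Dm) * resolvent Jb" unfolding YD ..
  also have "\<dots> = Ym * (Dm * resolvent Jb)" by (rule assoc_mult_mat[OF Ym_carrier Dm_carrier R])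
  also have "\<dots> = Ym" unfolding DR using Ym_carrier by simp
  finally show ?thesis .
qed

definition P2 :: "nat \<Rightarrow> nat \<Rightarrow> 'a poly" where
  "P2 r c = (\<Sum>j<k. \<Sum>l<n. Uf r j (Suc l) * [:Gs (k - 1 - j) $$ (c, l):])"

lemma Z_entry: assumes r: "r < q" and c: "c < t"
  shows "(emb_mat Hm * resolvent Jb * emb_mat Gm) $$ (r, c)
     = (\<Sum>j<k. Af r j * fr (gdg c (k - 1 - j))) - fr (P2 r c)"
proof -
  have eG: "emb_mat Gm \<in> carrier_mat (n * k) t" using Gm_carrier emb_carrier[of Gm] by simp
  have "(emb_mat Hm * resolvent Jb * emb_mat Gm) $$ (r, c) = (Ym * emb_mat Gm) $$ (r, c)" unfolding HR ..
  also have "\<dots> = (\<Sum>x<n * k. Ym $$ (r, x) * emb_mat Gm $$ (x, c))"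
    by (rule mult_entry[OF Ym_carrier eG r c])
  also have "\<dots> = (\<Sum>j<k. \<Sum>l<n. Ym $$ (r, j * n + l) * emb_mat Gm $$ (j * n + l, c))"
    by (rule sum_split)
  also have "\<dots> = (\<Sum>j<k. \<Sum>l<n. (Af r j * fr (Qp p (Suc l)) - fr (Uf r j (Suc l))) * fr [:Gs (k - 1 - j) $$ (c, l):])"
  proof (intro sum.cong refl)
    fix j l assume j: "j \<in> {..<k}" and l: "l \<in> {..<n}"
    have lt: "j * n + l < n * k" using idx_lt j l by simp
    have "emb_mat Gm $$ (j * n + l, c) = fr [:Gs (k - 1 - j) $$ (c, l):]"
      using lt c l Gm_carrier by (simp add: emb_mat_def Gm_def idx_div idx_mod)
    then show "Ym $$ (r, j * n + l) * emb_mat Gm $$ (j * n + l, c) =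
        (Af r j * fr (Qp p (Suc l)) - fr (Uf r j (Suc l))) * fr [:Gs (k - 1 - j) $$ (c, l):]"
      using Ym_jl[OF r] j l by simp
  qed
  also have "\<dots> = (\<Sum>j<k. Af r j * fr (gdg c (k - 1 - j)) - fr (\<Sum>l<n. Uf r j (Suc l) * [:Gs (k - 1 - j) $$ (c, l):]))"
  proof (intro sum.cong refl)
    fix j assume j: "j \<in> {..<k}"
    have eqg: "fr (gdg c (k - 1 - j)) = (\<Sum>l<n. fr [:Gs (k - 1 - j) $$ (c, l):] * fr (Qp p (Suc l)))"
      unfolding gdg_Q[OF c] to_fract_sum by (intro sum.cong refl) (simp flip: to_fract_mult)
    show "(\<Sum>l<n. (Af r j * fr (Qp p (Suc l)) - fr (Uf r j (Suc l))) * fr [:Gs (k - 1 - j) $$ (c, l):])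
        = Af r j * fr (gdg c (k - 1 - j)) - fr (\<Sum>l<n. Uf r j (Suc l) * [:Gs (k - 1 - j) $$ (c, l):])"
      unfolding eqg to_fract_sum sum_distrib_left sum_subtractf[symmetric]
      by (intro sum.cong refl) (simp add: algebra_simps fr_smult)
  qed
  also have "\<dots> = (\<Sum>j<k. Af r j * fr (gdg c (k - 1 - j))) - fr (P2 r c)"
    unfolding P2_def by (simp add: sum_subtractf)
  finally show ?thesis .
qed

end


context ctx
begin

abbreviation "Zm \<equiv> emb_mat Hm * resolvent Jb * emb_mat Gm"

definition Nn :: "nat \<Rightarrow> nat \<Rightarrow> 'a poly" where
  "Nn r c = (\<Sum>j<k. Sh p (hdg r) j * gdg c (k - 1 - j) * p ^ (k - 1 - j))"

lemma sumA: "(\<Sum>j<k. Af r j * fr (gdg c (k - 1 - j))) = fr (Nn r c) / fr (p ^ k)"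
proof -
  have "(\<Sum>j<k. Af r j * fr (gdg c (k - 1 - j)))
      = (\<Sum>j<k. fr (Sh p (hdg r) j * gdg c (k - 1 - j) * p ^ (k - 1 - j)) / fr (p ^ k))"
  proof (intro sum.cong refl)
    fix j assume j: "j \<in> {..<k}"
    have pk: "p ^ k = p ^ Suc j * p ^ (k - 1 - j)" unfolding power_add[symmetric] using j by auto
    have nz: "fr (p ^ (k - 1 - j)) \<noteq> 0" "fr (p ^ Suc j) \<noteq> 0" using p_nz by auto
    show "Af r j * fr (gdg c (k - 1 - j)) = fr (Sh p (hdg r) j * gdg c (k - 1 - j) * p ^ (k - 1 - j)) / fr (p ^ k)"
      unfolding Af_def pk to_fract_mult using nz by (simp add: field_simps)
  qed
  also have "\<dots> = fr (Nn r c) / fr (p ^ k)"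
    unfolding Nn_def to_fract_sum sum_divide_distrib ..
  finally show ?thesis .
qed

lemma dvd_main: "p ^ k dvd h $ r * g $ c - Nn r c"
  unfolding Nn_def
proof (rule cong_main[OF k])
  show "h $ r = (\<Sum>i<k. hdg r i * p ^ i) + h $ r div p ^ k * p ^ k"
    unfolding hdg_def by (rule expansion)
  show "g $ c = (\<Sum>m<k. gdg c m * p ^ m) + g $ c div p ^ k * p ^ k"
    unfolding gdg_def by (rule expansion)
qed

lemma Z_sp: assumes r: "r < q" and c: "c < t" shows "strictly_proper (Zm $$ (r, c))"
proof -
  obtain a where a: "degP a (n * k)" "Zm $$ (r, c) = fr a / fr (char_poly Jb)"
    using real_entry[OF Jb_carrier Hm_carrier Gm_carrier r c] by blast
  have "degree (char_poly Jb) = n * k" using degree_monic_char_poly[OF Jb_carrier] by simp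
  then show ?thesis unfolding a(2) using a(1) charpoly_nz[OF Jb_carrier]
    by (intro sp_frac) auto
qed

lemma W_decomp: assumes r: "r < q" and c: "c < t"
  shows "\<exists>y. Wm $$ (r, c) = Zm $$ (r, c) + fr y"
proof -
  obtain qq where qq: "h $ r * g $ c - Nn r c = p ^ k * qq" using dvd_main[of r c] unfolding dvd_def by blast
  have nz: "fr (p ^ k) \<noteq> 0" using p_nz by simp
  have "Wm $$ (r, c) = fr (h $ r * g $ c) / fr (p ^ k)" using r c by (simp add: Wm_def)
  also have "h $ r * g $ c = Nn r c + p ^ k * qq" using qq by (simp add: algebra_simps)
  also have "fr (Nn r c + p ^ k * qq) / fr (p ^ k) = fr (Nn r c) / fr (p ^ k) + fr qq"
    using nz by (simp add: field_simps)
  also have "fr (Nn r c) / fr (p ^ k) = Zm $$ (r, c) + fr (P2 r c)"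
    unfolding Z_entry[OF r c] sumA by simp
  finally have "Wm $$ (r, c) = Zm $$ (r, c) + fr (P2 r c + qq)" by simp
  then show ?thesis by blast
qed

lemma pi_entry: assumes r: "r < q" and c: "c < t"
  shows "pi_minus (Wm $$ (r, c)) = Zm $$ (r, c)"
proof -
  obtain y where "Wm $$ (r, c) = Zm $$ (r, c) + fr y" using W_decomp[OF r c] by blast
  then show ?thesis by (intro pi_minus_eq[OF Z_sp[OF r c]])
qed

lemma realization: "map_mat pi_minus Wm = Zm"
proof -
  have R: "resolvent Jb \<in> carrier_mat (n * k) (n * k)" by (rule resolvent_carrier[OF Jb_carrier])
  have eH: "emb_mat Hm \<in> carrier_mat q (n * k)" using Hm_carrier emb_carrier[of Hm] by simp
  have eG: "emb_mat Gm \<in> carrier_mat (n * k) t" using Gm_carrier emb_carrier[of Gm] by simp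
  have Zc: "Zm \<in> carrier_mat q t" using eH R eG by (meson mult_carrier_mat)
  have dW: "dim_row Wm = q" "dim_col Wm = t" by (simp_all add: Wm_def)
  show ?thesis
  proof (rule eq_matI)
    fix i j assume i: "i < dim_row Zm" and j: "j < dim_col Zm"
    then have ij: "i < q" "j < t" using Zc by auto
    have "map_mat pi_minus Wm $$ (i, j) = pi_minus (Wm $$ (i, j))" using ij dW by simp
    then show "map_mat pi_minus Wm $$ (i, j) = Zm $$ (i, j)" using pi_entry[OF ij] by simp
  qed (use Zc dW in auto)
qed

end


lemma prime_pow_dvd_cancel:
  fixes p X :: "'a::field poly"
  assumes pr: "prime_elem p" and nd: "\<not> p dvd X"
  shows "p ^ j dvd X * Y \<Longrightarrow> p ^ j dvd Y"
proof (induction j)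
  case (Suc j)
  have "p ^ j dvd p ^ Suc j" by (simp add: le_imp_power_dvd)
  then have "p ^ j dvd X * Y" using Suc.prems by (rule dvd_trans)
  then have "p ^ j dvd Y" by (rule Suc.IH)
  then obtain Y' where Y': "Y = p ^ j * Y'" by (elim dvdE)
  have pnz: "p \<noteq> 0" using pr by auto
  have "p ^ j * p dvd p ^ j * (X * Y')" using Suc.prems unfolding Y' power_Suc2 by (simp add: ac_simps)
  then have "p dvd X * Y'" using pnz by simp
  then have "p dvd Y'" using pr nd by (simp add: prime_elem_dvd_mult_iff)
  then show ?case unfolding Y' power_Suc2 by simp
qed simp

context ctx
begin

lemma p_prime: "prime_elem p" using irr by (rule field_poly_irreducible_imp_prime)

lemma exists_r: "\<exists>r<q. \<not> p dvd h $ r"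
proof (rule ccontr)
  assume "\<not> (\<exists>r<q. \<not> p dvd h $ r)"
  then have all: "\<forall>i<dim_vec h. p dvd h $ i" using dimh by auto
  have "p dvd p ^ k" using k by (simp add: dvd_power)
  then have "degree p = 0" using cop all unfolding coprime_fact_def by blast
  then show False using n1 by simp
qed

lemma exists_c: "\<exists>c<t. \<not> p dvd g $ c"
proof (rule ccontr)
  assume "\<not> (\<exists>c<t. \<not> p dvd g $ c)"
  then have all: "\<forall>i<dim_vec g. p dvd g $ i" using dimg by auto
  have "p dvd p ^ k" using k by (simp add: dvd_power)
  then have "degree p = 0" using cop all unfolding coprime_fact_def by blast
  then show False using n1 by simp
qed

lemma minimal: "\<not> (\<exists>m F' G' H'. m < n * k \<and> F' \<in> carrier_mat m m \<and> G' \<in> carrier_mat m t \<and>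
                 H' \<in> carrier_mat q m \<and>
                 emb_mat H' * resolvent F' * emb_mat G' = map_mat pi_minus Wm)"
proof
  assume "\<exists>m F' G' H'. m < n * k \<and> F' \<in> carrier_mat m m \<and> G' \<in> carrier_mat m t \<and>
                 H' \<in> carrier_mat q m \<and> emb_mat H' * resolvent F' * emb_mat G' = map_mat pi_minus Wm"
  then obtain m F' G' H' where m: "m < n * k" and F: "F' \<in> carrier_mat m m"
    and G: "G' \<in> carrier_mat m t" and H: "H' \<in> carrier_mat q m"
    and eq: "emb_mat H' * resolvent F' * emb_mat G' = map_mat pi_minus Wm" by blast
  obtain r where r: "r < q" "\<not> p dvd h $ r" using exists_r by blast
  obtain c where c: "c < t" "\<not> p dvd g $ c" using exists_c by blast
  obtain a where a: "(emb_mat H' * resolvent F' * emb_mat G') $$ (r, c) = fr a / fr (char_poly F')"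
    using real_entry[OF F H G r(1) c(1)] by blast
  obtain y where y: "Wm $$ (r, c) = Zm $$ (r, c) + fr y" using W_decomp[OF r(1) c(1)] by blast
  have "(map_mat pi_minus Wm) $$ (r, c) = pi_minus (Wm $$ (r, c))" using r c by (simp add: Wm_def)
  also have "\<dots> = Zm $$ (r, c)" by (rule pi_entry[OF r(1) c(1)])
  finally have e1: "fr a / fr (char_poly F') = fr (h $ r * g $ c) / fr (p ^ k) - fr y"
    using y a eq r c by (simp add: Wm_def)
  define \<chi> where "\<chi> = char_poly F'"
  have chi: "\<chi> \<noteq> 0" unfolding \<chi>_def by (rule charpoly_nz[OF F])
  have pk: "p ^ k \<noteq> 0" using p_nz by simp
  have "fr a * fr (p ^ k) = fr (h $ r * g $ c - y * p ^ k) * fr \<chi>"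
    using e1 chi pk unfolding \<chi>_def[symmetric] by (simp add: field_simps)
  then have e2: "a * p ^ k = (h $ r * g $ c - y * p ^ k) * \<chi>"
    by (simp only: to_fract_mult[symmetric] to_fract_eq_iff)
  have ndvd: "\<not> p dvd h $ r * g $ c - y * p ^ k"
  proof
    assume "p dvd h $ r * g $ c - y * p ^ k"
    moreover have "p dvd y * p ^ k" using k by (simp add: dvd_power)
    ultimately have "p dvd h $ r * g $ c" by (metis diff_add_cancel dvd_add)
    then show False using p_prime r(2) c(2) by (simp add: prime_elem_dvd_mult_iff)
  qed
  have "p ^ k dvd (h $ r * g $ c - y * p ^ k) * \<chi>" unfolding e2[symmetric] by simp
  then have "p ^ k dvd \<chi>" by (rule prime_pow_dvd_cancel[OF p_prime ndvd])
  then have "degree (p ^ k) \<le> degree \<chi>" using chi by (rule dvd_imp_degree_le)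
  moreover have "degree (p ^ k) = n * k" by (simp add: degree_power_eq p_nz)
  moreover have "degree \<chi> = m" unfolding \<chi>_def using degree_monic_char_poly[OF F] by simp
  ultimately show False using m by simp
qed

end


theorem theorem4p1:
  fixes p :: "'a::field poly" and k q t :: nat
    and h g :: "'a poly vec" and Hs Gs :: "nat \<Rightarrow> 'a mat"
  assumes monic: "lead_coeff p = 1"
    and irr: "irreducible p"
    and k: "k \<ge> 1"
    and dimh: "dim_vec h = q" and dimg: "dim_vec g = t"
    and cop: "coprime_fact p k h g"
    and Hs_dim: "\<forall>i. Hs i \<in> carrier_mat q (degree p)"
    and Hs_def: "\<forall>i. padic_vec p i h = const_mat (Hs i) *\<^sub>v bvec (degree p)"
    and Gs_dim: "\<forall>i. Gs i \<in> carrier_mat t (degree p)"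
    and Gs_def: "\<forall>i. padic_vec p i g = const_mat (Gs i * hankel_M p) *\<^sub>v bvec (degree p)"
  shows "let n = degree p;
             W = mat q t (\<lambda>(r, c). to_fract (h $ r) * to_fract (g $ c) / to_fract (p ^ k));
             H = mat q (n * k) (\<lambda>(r, c). Hs (c div n) $$ (r, c mod n));
             G = mat (n * k) t (\<lambda>(r, c). Gs (k - 1 - r div n) $$ (c, r mod n))
         in map_mat pi_minus W = emb_mat H * resolvent (jacobson_block p k) * emb_mat G \<and>
            \<not> (\<exists>m F' G' H'. m < n * k \<and> F' \<in> carrier_mat m m \<and> G' \<in> carrier_mat m t \<and>
                 H' \<in> carrier_mat q m \<and>
                 emb_mat H' * resolvent F' * emb_mat G' = map_mat pi_minus W)"
proof -
  interpret ctx p k q t h g Hs Gs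
    by (rule ctx.intro) (rule assms)+
  show ?thesis
    unfolding Let_def Wm_def[symmetric] Hm_def[symmetric] Gm_def[symmetric]
    using realization minimal by blast
qed

end
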